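(* Let $m$ and $n$ be positive integers with $n$ composite, and suppose that (i) $n$ is squarefree, and (ii) for every prime divisor $p$ of $n$ and every integer $r$ with $1\le r\le m$ there is an integer $i\ge 0$ such that $n\equiv p^i \pmod{p^r-1}$. Then for every integer $r$ with $1\le r\le m$ we have $\binom{n}{r}\equiv 0 \pmod n$. *)

theory Defs
  imports "HOL-Computational_Algebra.Computational_Algebra" "HOL-Number_Theory.Number_Theory"
begin

end

theory Submission
  imports Defs
begin

lemma sqf_dvd:
  fixes n x :: nat
  assumes "squarefree n" "n \<noteq> 0" "x \<noteq> 0" "\<And>p. prime p \<Longrightarrow> p dvd n \<Longrightarrow> p dvd x"
  shows "n dvd x"
proof -
  have "multiplicity p n \<le> multiplicity p x" if p: "prime p" for p
  proof (cases "p dvd n")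
    case True
    have "multiplicity p n \<le> 1" using assms(1,2) p squarefree_factorial_semiring'' by blast
    moreover have "p ^ 1 dvd x" using assms(4)[OF p True] by simp
    hence "1 \<le> multiplicity p x" using assms(3) p
      by (metis multiplicity_geI not_prime_unit)
    ultimately show ?thesis by linarith
  next
    case False
    then show ?thesis by (simp add: not_dvd_imp_multiplicity_0)
  qed
  thus ?thesis using assms(2,3) prime_multiplicity_le_imp_dvd by blast
qed

theorem lemma2:
  fixes m n :: nat
  assumes "m > 0" and "n > 1" and "\<not> prime n"
    and "squarefree n"
    and "\<And>p r. prime p \<Longrightarrow> p dvd n \<Longrightarrow> 1 \<le> r \<Longrightarrow> r \<le> m \<Longrightarrow>
           \<exists>i::nat. [n = p ^ i] (mod (p ^ r - 1))"
  shows "\<forall>r. 1 \<le> r \<and> r \<le> m \<longrightarrow> [n choose r = 0] (mod n)"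
proof (intro allI impI)
  fix r assume r: "1 \<le> r \<and> r \<le> m"
  have qd: "q dvd (n choose r)" if q: "prime q" "q dvd n" for q
  proof (cases "q dvd r")
    case False
    have "r * (n choose r) = n * ((n - 1) choose (r - 1))"
      using r times_binomial_minus1_eq by simp
    hence "q dvd r * (n choose r)" using q by simp
    thus ?thesis using False q prime_dvd_mult_nat by blast
  next
    case True
    have qr: "q \<le> r" using True r by (simp add: dvd_imp_le)
    obtain k where k: "n = q * k" using q by blast
    have "k \<noteq> 1" using k assms(3) q by auto
    moreover have "k \<noteq> 0" using k assms(2) by (metis mult_0_right not_one_less_zero)
    ultimately obtain p where p: "prime p" "p dvd k" using prime_factor_nat by blast
    have pq: "p \<noteq> q"
    proof
      assume "p = q"
      then have "q ^ 2 dvd n" using k p by (auto simp: power2_eq_square)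
      hence "q dvd 1" using assms(4) squarefreeD by blast
      thus False using q by simp
    qed
    have pn: "p dvd n" using k p by simp
    have q2: "q \<ge> 2" using q prime_ge_2_nat by blast
    obtain i where i: "[n = p ^ i] (mod (p ^ (q - 1) - 1))"
    proof -
      have "1 \<le> q - 1" "q - 1 \<le> m" using q2 qr r by auto
      thus ?thesis using assms(5)[OF p(1) pn, of "q - 1"] that by blast
    qed
    have "\<not> q dvd p" using pq p(1) q(1) primes_dvd_imp_eq[of q p] by blast
    hence "[p ^ (q - 1) = 1] (mod q)" using fermat_theorem q(1) by blast
    hence "q dvd p ^ (q - 1) - 1" by (rule cong_to_1_nat)
    hence "[n = p ^ i] (mod q)" using i cong_dvd_modulus_nat by blast
    moreover have "[n = 0] (mod q)" using q by (simp add: cong_0_iff)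
    ultimately have "[p ^ i = 0] (mod q)" by (metis cong_sym cong_trans)
    hence "q dvd p ^ i" by (simp add: cong_0_iff)
    hence "q dvd p" using q prime_dvd_power_nat by blast
    thus ?thesis using \<open>\<not> q dvd p\<close> by blast
  qed
  show "[n choose r = 0] (mod n)"
  proof (cases "n choose r = 0")
    case True thus ?thesis by (metis cong_0_iff dvd_0_right)
  next
    case False
    have "n dvd (n choose r)" using sqf_dvd[OF assms(4) _ False] qd assms(2) by auto
    thus ?thesis by (simp add: cong_0_iff)
  qed
qed

end
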